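(* Let $G=(V,E)$ be an $S$-regular graph with cells $V_1,\dots,V_k$, $n_i=|V_i|$, and let $B,C\subseteq V$, with $B_i=B\cap V_i$, $C_j=C\cap V_j$, $b_i=|B_i|/n_i$, $c_j=|C_j|/n_j$. Then \[\Bigl|\,|E(B,C)|-\sum_{i=1}^k\sum_{j=1}^k\sqrt{\tfrac{s_{ij}s_{ji}}{n_in_j}}\,|B_i||C_j|\,\Bigr|\le\lambda_B\sqrt{\sum_{i=1}^k\sum_{j=1}^k|B_i||C_j|(1-b_i)(1-c_j)}.\]
   Context: All graphs are simple, undirected and connected. $G$ is $S$-regular ($S=(s_{ij})$ a $k\times k$ nonnegative integer matrix) if $V$ is partitioned into nonempty cells $V_1,\dots,V_k$ such that every vertex of $V_i$ has exactly $s_{ij}$ neighbours in $V_j$. $|E(B,C)|$ denotes the number of pairs $(u,v)\in B\times C$ with $uv\in E$ (i.e. $\mathbf{1}_B^TA\mathbf{1}_C$, $A$ the adjacency matrix). The subspace $W=\mathrm{span}\{\mathbf{1}_{V_1},\dots,\mathbf{1}_{V_k}\}$ is $A$-invariant with eigenvalues on $W$ equal to those of $S$; the eigenvalues of $A$ on $W^\perp$ are the bulk eigenvalues (assume $|V|>k$), and $\lambda_B$ is the largest absolute value of a bulk eigenvalue. *)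

theory Defs
  imports Complex_Main
begin

definition simple_graph :: "'a set \<Rightarrow> ('a \<Rightarrow> 'a \<Rightarrow> bool) \<Rightarrow> bool" where
  "simple_graph V E \<longleftrightarrow> finite V \<and> (\<forall>u v. E u v \<longrightarrow> u \<in> V \<and> v \<in> V)
     \<and> (\<forall>u v. E u v \<longrightarrow> E v u) \<and> (\<forall>u. \<not> E u u)"

definition connected_graph :: "'a set \<Rightarrow> ('a \<Rightarrow> 'a \<Rightarrow> bool) \<Rightarrow> bool" where
  "connected_graph V E \<longleftrightarrow> V \<noteq> {} \<and> (\<forall>u\<in>V. \<forall>v\<in>V. E\<^sup>*\<^sup>* u v)"

definition S_regular ::
  "'a set \<Rightarrow> ('a \<Rightarrow> 'a \<Rightarrow> bool) \<Rightarrow> nat \<Rightarrow> (nat \<Rightarrow> 'a set) \<Rightarrow> (nat \<Rightarrow> nat \<Rightarrow> nat) \<Rightarrow> bool" where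
  "S_regular V E k P S \<longleftrightarrow>
     (\<forall>i<k. P i \<noteq> {} \<and> P i \<subseteq> V)
   \<and> (\<forall>i<k. \<forall>j<k. i \<noteq> j \<longrightarrow> P i \<inter> P j = {})
   \<and> (\<Union>i<k. P i) = V
   \<and> (\<forall>i<k. \<forall>j<k. \<forall>u\<in>P i. card {v \<in> P j. E u v} = S i j)"

definition adj_op :: "'a set \<Rightarrow> ('a \<Rightarrow> 'a \<Rightarrow> bool) \<Rightarrow> ('a \<Rightarrow> real) \<Rightarrow> 'a \<Rightarrow> real" where
  "adj_op V E f u = (\<Sum>v\<in>V. if E u v then f v else 0)"

definition W_perp :: "'a set \<Rightarrow> nat \<Rightarrow> (nat \<Rightarrow> 'a set) \<Rightarrow> ('a \<Rightarrow> real) set" where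
  "W_perp V k P = {f. (\<forall>x. x \<notin> V \<longrightarrow> f x = 0) \<and> (\<forall>i<k. (\<Sum>v\<in>P i. f v) = 0)}"

definition bulk_eigenvalues ::
  "'a set \<Rightarrow> ('a \<Rightarrow> 'a \<Rightarrow> bool) \<Rightarrow> nat \<Rightarrow> (nat \<Rightarrow> 'a set) \<Rightarrow> real set" where
  "bulk_eigenvalues V E k P = {\<mu>. \<exists>f\<in>W_perp V k P. (\<exists>x\<in>V. f x \<noteq> 0) \<and>
       (\<forall>u\<in>V. adj_op V E f u = \<mu> * f u)}"

definition lambda_B ::
  "'a set \<Rightarrow> ('a \<Rightarrow> 'a \<Rightarrow> bool) \<Rightarrow> nat \<Rightarrow> (nat \<Rightarrow> 'a set) \<Rightarrow> real" where
  "lambda_B V E k P = Max (abs ` bulk_eigenvalues V E k P)"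

definition edges_between :: "('a \<Rightarrow> 'a \<Rightarrow> bool) \<Rightarrow> 'a set \<Rightarrow> 'a set \<Rightarrow> nat" where
  "edges_between E B C = card {(u, v). u \<in> B \<and> v \<in> C \<and> E u v}"

end

theory Submission
  imports Defs "HOL-Analysis.Analysis"
begin


definition ip :: "'a set \<Rightarrow> ('a \<Rightarrow> real) \<Rightarrow> ('a \<Rightarrow> real) \<Rightarrow> real" where
  "ip V f g = (\<Sum>v\<in>V. f v * g v)"

lemma ip_comm: "ip V f g = ip V g f"
  unfolding ip_def by (simp add: mult.commute)

lemma ip_lin: "ip V (\<lambda>v. a * f v + b * g v) h = a * ip V f h + b * ip V g h"
  unfolding ip_def by (simp add: sum.distrib sum_distrib_left algebra_simps)

lemma ip_lin2: "ip V h (\<lambda>v. a * f v + b * g v) = a * ip V h f + b * ip V h g"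
  unfolding ip_def by (simp add: sum.distrib sum_distrib_left algebra_simps)

lemma ip_nonneg: "ip V f f \<ge> 0"
  unfolding ip_def by (simp add: sum_nonneg)

lemma ip_cong: "(\<And>v. v \<in> V \<Longrightarrow> f v = f' v) \<Longrightarrow> (\<And>v. v \<in> V \<Longrightarrow> g v = g' v) \<Longrightarrow> ip V f g = ip V f' g'"
  unfolding ip_def by simp

lemma ip_zero_iff: "finite V \<Longrightarrow> ip V f f = 0 \<longleftrightarrow> (\<forall>v\<in>V. f v = 0)"
  unfolding ip_def by (subst sum_nonneg_eq_0_iff) auto

lemma ip_zeroL: "(\<forall>v\<in>V. f v = 0) \<Longrightarrow> ip V f g = 0"
  unfolding ip_def by simp

lemma adj_alt: "adj_op V E f u = (\<Sum>v\<in>V. (if E u v then 1 else 0) * f v)"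
  unfolding adj_op_def by (rule sum.cong) auto

lemma adj_lin: "adj_op V E (\<lambda>v. a * f v + b * g v) u = a * adj_op V E f u + b * adj_op V E g u"
  unfolding adj_alt by (simp add: sum.distrib sum_distrib_left algebra_simps)

lemma adj_sym:
  assumes "simple_graph V E"
  shows "ip V f (adj_op V E g) = ip V (adj_op V E f) g"
proof -
  have sym: "E u v = E v u" for u v using assms unfolding simple_graph_def by blast
  have "ip V f (adj_op V E g) = (\<Sum>u\<in>V. \<Sum>v\<in>V. (if E u v then f u * g v else 0))"
    unfolding ip_def adj_alt by (auto simp add: sum_distrib_left intro!: sum.cong)
  also have "\<dots> = (\<Sum>v\<in>V. \<Sum>u\<in>V. (if E u v then f u * g v else 0))"
    by (rule sum.swap)
  also have "\<dots> = ip V (adj_op V E f) g"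
    unfolding ip_def adj_alt by (auto simp add: sum_distrib_right sym intro!: sum.cong)
  finally show ?thesis .
qed

lemma adj_out: "simple_graph V E \<Longrightarrow> u \<notin> V \<Longrightarrow> adj_op V E f u = 0"
  unfolding adj_op_def simple_graph_def by (auto intro!: sum.neutral)

lemma Wp_lin: "f \<in> W_perp V k P \<Longrightarrow> g \<in> W_perp V k P \<Longrightarrow> (\<lambda>v. a * f v + b * g v) \<in> W_perp V k P"
  unfolding W_perp_def by (simp add: sum.distrib sum_distrib_left[symmetric])

lemma continuous_on_coord [continuous_intros]: "continuous_on S (\<lambda>f::'b \<Rightarrow> real. f i)"
  by (rule continuous_on_subset[OF continuous_on_product_coordinates]) auto



lemma adj_scale: "adj_op V E (\<lambda>v. c * f v) u = c * adj_op V E f u"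
  unfolding adj_alt by (simp add: sum_distrib_left algebra_simps)

lemma ip_scale: "ip V (\<lambda>v. c * f v) g = c * ip V f g" "ip V g (\<lambda>v. c * f v) = c * ip V g f"
  unfolding ip_def by (simp_all add: sum_distrib_left algebra_simps)

lemma ip_expand: "ip V (\<lambda>v. x v + t * y v) (\<lambda>v. x v + t * y v) = ip V x x + 2 * t * ip V y x + t^2 * ip V y y"
  unfolding ip_def by (simp add: sum.distrib sum_distrib_left algebra_simps power2_eq_square)

lemma le_ip: "finite V \<Longrightarrow> v \<in> V \<Longrightarrow> (f v)^2 \<le> ip V f f"
  unfolding ip_def power2_eq_square by (rule member_le_sum) auto

locale gr =
  fixes V :: "'a set" and E :: "'a \<Rightarrow> 'a \<Rightarrow> bool" and k :: nat and P :: "nat \<Rightarrow> 'a set"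
  assumes sg: "simple_graph V E"
    and inv: "\<And>f. f \<in> W_perp V k P \<Longrightarrow> adj_op V E f \<in> W_perp V k P"
begin

definition q where "q f = ip V f (adj_op V E f)"

lemma finV: "finite V" using sg unfolding simple_graph_def by blast

lemma ipA_comm: "ip V y (adj_op V E x) = ip V x (adj_op V E y)"
  using adj_sym[OF sg] ip_comm by metis

lemma q_expand: "q (\<lambda>v. x v + t * y v) = q x + 2 * t * ip V y (adj_op V E x) + t^2 * q y"
proof -
  have e: "adj_op V E (\<lambda>v. x v + t * y v) = (\<lambda>u. adj_op V E x u + t * adj_op V E y u)"
    using adj_lin[of V E 1 x t y] by auto
  have "q (\<lambda>v. x v + t * y v) = ip V (\<lambda>v. 1 * x v + t * y v) (\<lambda>u. 1 * adj_op V E x u + t * adj_op V E y u)"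
    unfolding q_def e by simp
  also have "\<dots> = q x + t * ip V x (adj_op V E y) + t * ip V y (adj_op V E x) + t^2 * q y"
    unfolding ip_lin ip_lin2 q_def by (simp add: algebra_simps power2_eq_square)
  finally show ?thesis using ipA_comm[of y x] by simp
qed

lemma q_scale: "q (\<lambda>v. c * f v) = c^2 * q f"
proof -
  have e: "adj_op V E (\<lambda>v. c * f v) = (\<lambda>u. c * adj_op V E f u)"
    by (rule ext, rule adj_scale)
  show ?thesis unfolding q_def e ip_scale by (simp add: power2_eq_square)
qed

lemma eig_ext:
  assumes x: "x \<in> W_perp V k P" and s: "s = 1 \<or> s = -1"
    and ext: "\<forall>z\<in>W_perp V k P. s * (q z - \<mu> * ip V z z) \<le> 0"
    and qx: "q x = \<mu> * ip V x x"
  shows "\<forall>u\<in>V. adj_op V E x u = \<mu> * x u"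
proof -
  define y where "y = (\<lambda>v. 1 * adj_op V E x v + (- \<mu>) * x v)"
  have yU: "y \<in> W_perp V k P" unfolding y_def by (rule Wp_lin[OF inv[OF x] x])
  define Y where "Y = ip V y y"
  have Yeq: "ip V y (adj_op V E x) - \<mu> * ip V y x = Y"
    unfolding Y_def by (subst (3) y_def, subst ip_lin2) simp
  define c where "c = s * (q y - \<mu> * ip V y y)"
  have key: "s * 2 * t * Y + c * t^2 \<le> 0" for t
  proof -
    have "(\<lambda>v. 1 * x v + t * y v) \<in> W_perp V k P" by (rule Wp_lin[OF x yU])
    then have "s * (q (\<lambda>v. x v + t * y v) - \<mu> * ip V (\<lambda>v. x v + t * y v) (\<lambda>v. x v + t * y v)) \<le> 0"
      using ext by auto
    also have "q (\<lambda>v. x v + t * y v) - \<mu> * ip V (\<lambda>v. x v + t * y v) (\<lambda>v. x v + t * y v)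
       = 2 * t * (ip V y (adj_op V E x) - \<mu> * ip V y x) + t^2 * (q y - \<mu> * ip V y y)"
      unfolding q_expand ip_expand using qx by (simp add: algebra_simps)
    finally show ?thesis unfolding Yeq c_def by (simp add: algebra_simps)
  qed
  have ss: "s * s = 1" using s by auto
  have Y0: "Y = 0"
  proof (rule ccontr)
    assume "Y \<noteq> 0"
    define d where "d = 1 + \<bar>c\<bar>"
    have d: "d > 0" unfolding d_def by simp
    have "s * 2 * (s * Y / d) * Y + c * (s * Y / d)^2 \<le> 0" by (rule key)
    then have "2 * Y^2 / d + c * Y^2 / d^2 \<le> 0"
      using s by (auto simp add: power2_eq_square algebra_simps)
    moreover have "2 * Y^2 / d + c * Y^2 / d^2 = (2 * Y^2 * d + c * Y^2) / d^2"
      using d by (simp add: field_simps power2_eq_square)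
    ultimately have "(2 * Y^2 * d + c * Y^2) / d^2 \<le> 0" by simp
    then have "2 * Y^2 * d + c * Y^2 \<le> 0" using d by (simp add: divide_le_0_iff)
    then have "Y^2 * (2 * d + c) \<le> 0" by (simp add: algebra_simps)
    moreover have "2 * d + c > 0" unfolding d_def by (cases "c \<ge> 0") auto
    moreover have "Y^2 > 0" using \<open>Y \<noteq> 0\<close> by simp
    ultimately show False by (metis mult_pos_pos not_le)
  qed
  then have "\<forall>v\<in>V. y v = 0" unfolding Y_def using ip_zero_iff[OF finV] by blast
  then show ?thesis unfolding y_def by simp
qed

end


context gr begin

lemma q_cont: "continuous_on S q"
proof -
  have "q = (\<lambda>f. \<Sum>u\<in>V. f u * (\<Sum>v\<in>V. (if E u v then 1 else 0) * f v))"
    unfolding q_def ip_def adj_alt by simp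
  then show ?thesis by (simp add: continuous_intros)
qed

lemma ext_exists:
  assumes s: "s = 1 \<or> s = -1" and ne: "\<exists>f\<in>W_perp V k P. \<exists>v\<in>V. f v \<noteq> 0"
  shows "\<exists>x\<in>W_perp V k P. ip V x x = 1 \<and> (\<forall>z\<in>W_perp V k P. s * q z \<le> s * q x * ip V z z)"
proof -
  define Bx where "Bx = (\<lambda>v::'a. if v \<in> V then {-1..1::real} else {0})"
  define box where "box = PiE UNIV Bx"
  define K where "K = box \<inter> {f. ip V f f = 1} \<inter> (\<Inter>i\<in>{..<k}. {f. sum f (P i) = 0})"
  have cb: "compact box"
  proof -
    have "compactin (product_topology (\<lambda>_. euclidean) UNIV) box"
      unfolding box_def compactin_PiE
    proof (rule disjI2, intro ballI)
      fix i show "compactin euclidean (Bx i)" unfolding Bx_def compactin_euclidean_iff by simp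
    qed
    then show ?thesis by (simp add: euclidean_product_topology)
  qed
  have c1: "closed {f::'a\<Rightarrow>real. ip V f f = 1}"
    unfolding ip_def by (rule closed_Collect_eq) (auto intro!: continuous_intros)
  have c2: "closed (\<Inter>i\<in>{..<k}. {f::'a\<Rightarrow>real. sum f (P i) = 0})"
    by (intro closed_INT ballI closed_Collect_eq) (auto intro!: continuous_intros)
  have cK: "compact K" unfolding K_def Int_assoc
    by (rule compact_Int_closed[OF cb closed_Int[OF c1 c2]])
  have KU: "K \<subseteq> W_perp V k P"
  proof
    fix f assume "f \<in> K"
    then have f1: "\<forall>v. f v \<in> Bx v" and f2: "\<forall>i<k. sum f (P i) = 0"
      unfolding K_def box_def by (auto simp: PiE_iff)
    have "\<forall>x. x \<notin> V \<longrightarrow> f x = 0" using f1 unfolding Bx_def by (metis singletonD)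
    then show "f \<in> W_perp V k P" unfolding W_perp_def using f2 by blast
  qed
  have norm_in: "(\<lambda>v. (1 / sqrt (ip V z z)) * z v) \<in> K" if z: "z \<in> W_perp V k P" "ip V z z > 0" for z
  proof -
    define zn where "zn = (\<lambda>v. (1 / sqrt (ip V z z)) * z v)"
    have n1: "ip V zn zn = 1" unfolding zn_def ip_scale using z(2)
      by (simp add: power2_eq_square)
    have "zn \<in> box" unfolding box_def Bx_def
    proof (auto simp: PiE_def Pi_def)
      fix v assume v: "v \<in> V"
      have "(zn v)^2 \<le> 1" using le_ip[OF finV v, of zn] n1 by simp
      then show "- 1 \<le> zn v" "zn v \<le> 1" using abs_le_square_iff[of "zn v" 1] by auto
    next
      fix v assume "v \<notin> V" then show "zn v = 0" using z(1) unfolding zn_def W_perp_def by auto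
    qed
    moreover have "zn \<in> (\<Inter>i\<in>{..<k}. {f. sum f (P i) = 0})"
      using z(1) unfolding zn_def W_perp_def by (auto simp: sum_divide_distrib[symmetric])
    ultimately show ?thesis using n1 unfolding K_def zn_def by auto
  qed
  obtain f v where f: "f \<in> W_perp V k P" "v \<in> V" "f v \<noteq> 0" using ne by blast
  have "ip V f f \<noteq> 0" using ip_zero_iff[OF finV, of f] f by auto
  then have "ip V f f > 0" using ip_nonneg[of V f] by linarith
  then have Kne: "K \<noteq> {}" using norm_in[OF f(1)] by blast
  have "continuous_on K (\<lambda>f. s * q f)" by (intro continuous_intros q_cont)
  then obtain x where x: "x \<in> K" "\<And>y. y \<in> K \<Longrightarrow> s * q y \<le> s * q x"
    using continuous_attains_sup[OF cK Kne] by blast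
  have "\<forall>z\<in>W_perp V k P. s * q z \<le> s * q x * ip V z z"
  proof
    fix z assume z: "z \<in> W_perp V k P"
    show "s * q z \<le> s * q x * ip V z z"
    proof (cases "ip V z z = 0")
      case True
      then have "\<forall>v\<in>V. z v = 0" using ip_zero_iff[OF finV] by blast
      then have "q z = 0" unfolding q_def by (rule ip_zeroL)
      then show ?thesis using True by simp
    next
      case False
      then have pos: "ip V z z > 0" using ip_nonneg[of V z] by linarith
      have "s * q (\<lambda>v. (1 / sqrt (ip V z z)) * z v) \<le> s * q x" using x(2) norm_in[OF z pos] by blast
      then have "s * q z / ip V z z \<le> s * q x" unfolding q_scale using pos
        by (simp add: power2_eq_square)
      then show ?thesis using pos by (simp add: divide_le_eq mult.commute)
    qed
  qed
  moreover have "ip V x x = 1" using x(1) unfolding K_def by auto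
  ultimately show ?thesis using x(1) KU by blast
qed

lemma ext_eig:
  assumes s: "s = 1 \<or> s = -1" and ne: "\<exists>f\<in>W_perp V k P. \<exists>v\<in>V. f v \<noteq> 0"
  shows "\<exists>\<mu>\<in>bulk_eigenvalues V E k P. \<forall>z\<in>W_perp V k P. s * q z \<le> s * \<mu> * ip V z z"
proof -
  obtain x where x: "x \<in> W_perp V k P" "ip V x x = 1" "\<forall>z\<in>W_perp V k P. s * q z \<le> s * q x * ip V z z"
    using ext_exists[OF s ne] by blast
  have "\<forall>z\<in>W_perp V k P. s * (q z - q x * ip V z z) \<le> 0"
    using x(3) by (simp add: algebra_simps)
  then have eig: "\<forall>u\<in>V. adj_op V E x u = q x * x u"
    using eig_ext[OF x(1) s] x(2) by simp
  have "\<exists>v\<in>V. x v \<noteq> 0" using x(2) ip_zero_iff[OF finV, of x] by auto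
  then have "q x \<in> bulk_eigenvalues V E k P" unfolding bulk_eigenvalues_def using x(1) eig by blast
  then show ?thesis using x(3) by blast
qed

end


lemma orth_card:
  fixes u :: "real \<Rightarrow> 'a \<Rightarrow> real"
  assumes fV: "finite V" and fF: "finite F"
    and n1: "\<forall>\<mu>\<in>F. ip V (u \<mu>) (u \<mu>) = 1"
    and o: "\<forall>\<mu>\<in>F. \<forall>\<nu>\<in>F. \<mu> \<noteq> \<nu> \<longrightarrow> ip V (u \<mu>) (u \<nu>) = 0"
  shows "card F \<le> card V"
proof -
  have pt: "(\<Sum>\<mu>\<in>F. (u \<mu> v)^2) \<le> 1" if v: "v \<in> V" for v
  proof -
    define c where "c = (\<lambda>\<mu>. u \<mu> v)"
    define w where "w = (\<lambda>x. \<Sum>\<mu>\<in>F. c \<mu> * u \<mu> x)"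
    define s where "s = (\<Sum>\<mu>\<in>F. (u \<mu> v)^2)"
    have "ip V w w = (\<Sum>x\<in>V. \<Sum>\<mu>\<in>F. \<Sum>\<nu>\<in>F. c \<mu> * c \<nu> * (u \<mu> x * u \<nu> x))"
      unfolding ip_def w_def sum_product by (simp add: algebra_simps)
    also have "\<dots> = (\<Sum>\<mu>\<in>F. \<Sum>x\<in>V. \<Sum>\<nu>\<in>F. c \<mu> * c \<nu> * (u \<mu> x * u \<nu> x))"
      by (rule sum.swap)
    also have "\<dots> = (\<Sum>\<mu>\<in>F. \<Sum>\<nu>\<in>F. \<Sum>x\<in>V. c \<mu> * c \<nu> * (u \<mu> x * u \<nu> x))"
      by (rule sum.cong[OF refl], rule sum.swap)
    also have "\<dots> = (\<Sum>\<mu>\<in>F. \<Sum>\<nu>\<in>F. c \<mu> * c \<nu> * ip V (u \<mu>) (u \<nu>))"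
      unfolding ip_def by (simp add: sum_distrib_left)
    also have "\<dots> = (\<Sum>\<mu>\<in>F. c \<mu> * c \<mu>)"
    proof (rule sum.cong[OF refl])
      fix \<mu> assume m: "\<mu> \<in> F"
      have "(\<Sum>\<nu>\<in>F. c \<mu> * c \<nu> * ip V (u \<mu>) (u \<nu>)) = c \<mu> * c \<mu> * ip V (u \<mu>) (u \<mu>)
           + (\<Sum>\<nu>\<in>F - {\<mu>}. c \<mu> * c \<nu> * ip V (u \<mu>) (u \<nu>))"
        by (rule sum.remove[OF fF m])
      also have "(\<Sum>\<nu>\<in>F - {\<mu>}. c \<mu> * c \<nu> * ip V (u \<mu>) (u \<nu>)) = 0"
        using o m by (intro sum.neutral) auto
      finally show "(\<Sum>\<nu>\<in>F. c \<mu> * c \<nu> * ip V (u \<mu>) (u \<nu>)) = c \<mu> * c \<mu>" using n1 m by simp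
    qed
    also have "\<dots> = s" unfolding s_def c_def by (simp add: power2_eq_square)
    finally have ww: "ip V w w = s" .
    have wv: "w v = s" unfolding w_def s_def c_def by (simp add: power2_eq_square)
    have "s^2 \<le> s" using le_ip[OF fV v, of w] ww wv by simp
    moreover have "s \<ge> 0" unfolding s_def by (simp add: sum_nonneg)
    have "s \<le> 1"
    proof (rule ccontr)
      assume "\<not> s \<le> 1"
      then have "s * 1 < s * s" by (intro mult_strict_left_mono) auto
      then show False using \<open>s^2 \<le> s\<close> by (simp add: power2_eq_square)
    qed
    then show ?thesis unfolding s_def .
  qed
  have "real (card F) = (\<Sum>\<mu>\<in>F. ip V (u \<mu>) (u \<mu>))" using n1 by simp
  also have "\<dots> = (\<Sum>v\<in>V. \<Sum>\<mu>\<in>F. (u \<mu> v)^2)"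
    unfolding ip_def power2_eq_square by (rule sum.swap)
  also have "\<dots> \<le> (\<Sum>v\<in>V. 1)" by (rule sum_mono) (rule pt)
  finally show ?thesis by simp
qed

context gr begin

lemma eig_orth:
  assumes f: "\<forall>u\<in>V. adj_op V E f u = \<mu> * f u" and g: "\<forall>u\<in>V. adj_op V E g u = \<nu> * g u"
    and ne: "\<mu> \<noteq> \<nu>"
  shows "ip V f g = 0"
proof -
  have "\<mu> * ip V f g = ip V (adj_op V E f) g"
    using ip_cong[of V "adj_op V E f" "\<lambda>u. \<mu> * f u" g g] f ip_scale(1)[where c=\<mu> and f=f and g=g] by simp
  also have "\<dots> = ip V f (adj_op V E g)" using adj_sym[OF sg] by simp
  also have "\<dots> = \<nu> * ip V f g"
    using ip_cong[of V f f "adj_op V E g" "\<lambda>u. \<nu> * g u"] g ip_scale(2)[where c=\<nu> and f=g and g=f] by simp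
  finally show ?thesis using ne by simp
qed

lemma bulk_finite: "finite (bulk_eigenvalues V E k P)"
proof (rule ccontr)
  assume "infinite (bulk_eigenvalues V E k P)"
  then obtain F where F: "finite F" "card F = Suc (card V)" "F \<subseteq> bulk_eigenvalues V E k P"
    using infinite_arbitrarily_large by blast
  define g where "g = (\<lambda>\<mu>. SOME f. f \<in> W_perp V k P \<and> (\<exists>x\<in>V. f x \<noteq> 0) \<and> (\<forall>u\<in>V. adj_op V E f u = \<mu> * f u))"
  have g: "(\<exists>x\<in>V. g \<mu> x \<noteq> 0) \<and> (\<forall>u\<in>V. adj_op V E (g \<mu>) u = \<mu> * g \<mu> u)" if "\<mu> \<in> F" for \<mu>
  proof -
    have "\<exists>f. f \<in> W_perp V k P \<and> (\<exists>x\<in>V. f x \<noteq> 0) \<and> (\<forall>u\<in>V. adj_op V E f u = \<mu> * f u)"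
      using F(3) that unfolding bulk_eigenvalues_def by blast
    then show ?thesis unfolding g_def by (rule someI2_ex) blast
  qed
  define u where "u = (\<lambda>\<mu> v. (1 / sqrt (ip V (g \<mu>) (g \<mu>))) * g \<mu> v)"
  have pos: "ip V (g \<mu>) (g \<mu>) > 0" if "\<mu> \<in> F" for \<mu>
  proof -
    have "ip V (g \<mu>) (g \<mu>) \<noteq> 0" using g[OF that] ip_zero_iff[OF finV, of "g \<mu>"] by auto
    then show ?thesis using ip_nonneg[of V "g \<mu>"] by linarith
  qed
  have "card F \<le> card V"
  proof (rule orth_card[OF finV F(1)])
    show "\<forall>\<mu>\<in>F. ip V (u \<mu>) (u \<mu>) = 1"
    proof
      fix \<mu> assume "\<mu> \<in> F"
      then have p: "ip V (g \<mu>) (g \<mu>) > 0" by (rule pos)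
      then have "sqrt (ip V (g \<mu>) (g \<mu>)) * sqrt (ip V (g \<mu>) (g \<mu>)) = ip V (g \<mu>) (g \<mu>)"
        by simp
      then show "ip V (u \<mu>) (u \<mu>) = 1" using p unfolding u_def ip_scale
        by (simp add: field_simps)
    qed
    show "\<forall>\<mu>\<in>F. \<forall>\<nu>\<in>F. \<mu> \<noteq> \<nu> \<longrightarrow> ip V (u \<mu>) (u \<nu>) = 0"
    proof (intro ballI impI)
      fix \<mu> \<nu> assume m: "\<mu> \<in> F" and n: "\<nu> \<in> F" and ne: "\<mu> \<noteq> \<nu>"
      have "ip V (g \<mu>) (g \<nu>) = 0" using g[OF m] g[OF n] ne by (intro eig_orth) auto
      then show "ip V (u \<mu>) (u \<nu>) = 0" unfolding u_def ip_scale by simp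
    qed
  qed
  then show False using F(2) by simp
qed

lemma q_bound: "z \<in> W_perp V k P \<Longrightarrow> \<bar>q z\<bar> \<le> lambda_B V E k P * ip V z z"
proof (cases "\<exists>f\<in>W_perp V k P. \<exists>v\<in>V. f v \<noteq> 0")
  case True
  assume z: "z \<in> W_perp V k P"
  obtain m1 where m1: "m1 \<in> bulk_eigenvalues V E k P" "1 * q z \<le> 1 * m1 * ip V z z"
    using ext_eig[of 1, OF _ True] z by blast
  obtain m2 where m2: "m2 \<in> bulk_eigenvalues V E k P" "-1 * q z \<le> -1 * m2 * ip V z z"
    using ext_eig[of "-1", OF _ True] z by blast
  have L: "\<bar>m\<bar> \<le> lambda_B V E k P" if "m \<in> bulk_eigenvalues V E k P" for m
    unfolding lambda_B_def using bulk_finite that by (intro Max_ge) auto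
  have n: "ip V z z \<ge> 0" by (rule ip_nonneg)
  have "m1 * ip V z z \<le> lambda_B V E k P * ip V z z"
    using L[OF m1(1)] n by (intro mult_right_mono) auto
  moreover have "- m2 * ip V z z \<le> lambda_B V E k P * ip V z z"
    using L[OF m2(1)] n by (intro mult_right_mono) auto
  ultimately show ?thesis using m1(2) m2(2) by simp
next
  case False
  assume z: "z \<in> W_perp V k P"
  then have "\<forall>v\<in>V. z v = 0" using False by blast
  then have "q z = 0" "ip V z z = 0" unfolding q_def by (auto intro: ip_zeroL)
  then show ?thesis by simp
qed

lemma polar:
  assumes a: "a \<in> W_perp V k P" and b: "b \<in> W_perp V k P"
  shows "\<bar>ip V a (adj_op V E b)\<bar> \<le> lambda_B V E k P * (ip V a a + ip V b b) / 2"
proof -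
  let ?L = "lambda_B V E k P"
  have p: "(\<lambda>v. a v + 1 * b v) \<in> W_perp V k P" using Wp_lin[OF a b, of 1 1] by simp
  have m: "(\<lambda>v. a v + (-1) * b v) \<in> W_perp V k P" using Wp_lin[OF a b, of 1 "-1"] by simp
  have "4 * ip V b (adj_op V E a) = q (\<lambda>v. a v + 1 * b v) - q (\<lambda>v. a v + (-1) * b v)"
    unfolding q_expand by simp
  moreover have "ip V (\<lambda>v. a v + 1 * b v) (\<lambda>v. a v + 1 * b v) + ip V (\<lambda>v. a v + (-1) * b v) (\<lambda>v. a v + (-1) * b v)
     = 2 * (ip V a a + ip V b b)"
    unfolding ip_expand by simp
  ultimately have "4 * \<bar>ip V b (adj_op V E a)\<bar> \<le> ?L * (2 * (ip V a a + ip V b b))"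
  proof -
    assume e1: "4 * ip V b (adj_op V E a) = q (\<lambda>v. a v + 1 * b v) - q (\<lambda>v. a v + (-1) * b v)"
    assume e2: "ip V (\<lambda>v. a v + 1 * b v) (\<lambda>v. a v + 1 * b v) + ip V (\<lambda>v. a v + (-1) * b v) (\<lambda>v. a v + (-1) * b v)
     = 2 * (ip V a a + ip V b b)"
    have "4 * \<bar>ip V b (adj_op V E a)\<bar> = \<bar>q (\<lambda>v. a v + 1 * b v) - q (\<lambda>v. a v + (-1) * b v)\<bar>"
      using e1 by (metis abs_mult abs_numeral)
    also have "\<dots> \<le> \<bar>q (\<lambda>v. a v + 1 * b v)\<bar> + \<bar>q (\<lambda>v. a v + (-1) * b v)\<bar>" by (rule abs_triangle_ineq4)
    also have "\<dots> \<le> ?L * ip V (\<lambda>v. a v + 1 * b v) (\<lambda>v. a v + 1 * b v) + ?L * ip V (\<lambda>v. a v + (-1) * b v) (\<lambda>v. a v + (-1) * b v)"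
      using q_bound[OF p] q_bound[OF m] by linarith
    also have "\<dots> = ?L * (2 * (ip V a a + ip V b b))" using e2 by (simp only: distrib_left[symmetric])
    finally show ?thesis .
  qed
  moreover have "?L * (2 * (ip V a a + ip V b b)) = 2 * (?L * (ip V a a + ip V b b))"
    by (simp only: mult.left_commute)
  ultimately show ?thesis using ipA_comm[of b a] by linarith
qed

lemma main_bound:
  assumes x: "x \<in> W_perp V k P" and y: "y \<in> W_perp V k P"
  shows "\<bar>ip V x (adj_op V E y)\<bar> \<le> lambda_B V E k P * sqrt (ip V x x) * sqrt (ip V y y)"
proof -
  let ?L = "lambda_B V E k P"
  consider "ip V x x = 0" | "ip V y y = 0" | "ip V x x > 0 \<and> ip V y y > 0"
    using ip_nonneg[of V x] ip_nonneg[of V y] by linarith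
  then show ?thesis
  proof cases
    case 1
    then have "\<forall>v\<in>V. x v = 0" using ip_zero_iff[OF finV] by blast
    then show ?thesis using 1 by (simp add: ip_zeroL)
  next
    case 2
    then have "\<forall>v\<in>V. y v = 0" using ip_zero_iff[OF finV] by blast
    then have "ip V y (adj_op V E x) = 0" by (simp add: ip_zeroL)
    then show ?thesis using 2 ipA_comm[of y x] by simp
  next
    case 3
    define s where "s = sqrt (ip V x x)"
    define t where "t = sqrt (ip V y y)"
    have s: "s > 0" "s^2 = ip V x x" using 3 unfolding s_def by auto
    have t: "t > 0" "t^2 = ip V y y" using 3 unfolding t_def by auto
    have a: "(\<lambda>v. t * x v) \<in> W_perp V k P" using Wp_lin[OF x x, of t 0] by simp
    have b: "(\<lambda>v. s * y v) \<in> W_perp V k P" using Wp_lin[OF y y, of s 0] by simp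
    have e: "adj_op V E (\<lambda>v. s * y v) = (\<lambda>u. s * adj_op V E y u)" by (rule ext, rule adj_scale)
    have "\<bar>ip V (\<lambda>v. t * x v) (adj_op V E (\<lambda>v. s * y v))\<bar>
        \<le> ?L * (ip V (\<lambda>v. t * x v) (\<lambda>v. t * x v) + ip V (\<lambda>v. s * y v) (\<lambda>v. s * y v)) / 2"
      by (rule polar[OF a b])
    also have "ip V (\<lambda>v. t * x v) (adj_op V E (\<lambda>v. s * y v)) = (s * t) * ip V x (adj_op V E y)"
      unfolding e ip_scale by simp
    also have "ip V (\<lambda>v. t * x v) (\<lambda>v. t * x v) = t^2 * s^2"
      unfolding ip_scale s(2) by (simp add: power2_eq_square)
    also have "ip V (\<lambda>v. s * y v) (\<lambda>v. s * y v) = t^2 * s^2"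
      unfolding ip_scale t(2) by (simp add: power2_eq_square)
    finally have "(s * t) * \<bar>ip V x (adj_op V E y)\<bar> \<le> (s * t) * (?L * s * t)"
      using s t by (simp add: abs_mult power2_eq_square algebra_simps)
    then have "\<bar>ip V x (adj_op V E y)\<bar> \<le> ?L * s * t"
      using s t by (simp add: mult_le_cancel_left_pos)
    then show ?thesis unfolding s_def t_def .
  qed
qed

end


definition indf :: "'a set \<Rightarrow> 'a \<Rightarrow> real" where "indf X v = (if v \<in> X then 1 else 0)"

lemma sum_indf: "finite X \<Longrightarrow> (\<Sum>v\<in>X. indf Y v) = real (card (Y \<inter> X))"
  unfolding indf_def by (simp add: sum.If_cases Int_commute)

lemma adj_sum: "finite I \<Longrightarrow> adj_op V E (\<lambda>v. \<Sum>i\<in>I. h i v) u = (\<Sum>i\<in>I. adj_op V E (h i) u)"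
  unfolding adj_alt by (simp add: sum_distrib_left) (rule sum.swap)

lemma adj_indf: "finite V \<Longrightarrow> X \<subseteq> V \<Longrightarrow> adj_op V E (indf X) u = real (card {v \<in> X. E u v})"
proof -
  assume fV: "finite V" and X: "X \<subseteq> V"
  have "adj_op V E (indf X) u = (\<Sum>v\<in>V. if E u v \<and> v \<in> X then 1 else 0)"
    unfolding adj_op_def indf_def by (rule sum.cong) auto
  also have "\<dots> = real (card (V \<inter> {v. E u v \<and> v \<in> X}))"
    by (simp add: sum.If_cases fV)
  also have "V \<inter> {v. E u v \<and> v \<in> X} = {v \<in> X. E u v}" using X by auto
  finally show ?thesis .
qed

locale sr =
  fixes V :: "'a set" and E :: "'a \<Rightarrow> 'a \<Rightarrow> bool" and k :: nat and P :: "nat \<Rightarrow> 'a set"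
    and S :: "nat \<Rightarrow> nat \<Rightarrow> nat"
  assumes sg: "simple_graph V E" and reg: "S_regular V E k P S"
begin

lemma finV: "finite V" using sg unfolding simple_graph_def by blast
lemma PV: "i < k \<Longrightarrow> P i \<subseteq> V" using reg unfolding S_regular_def by blast
lemma Pne: "i < k \<Longrightarrow> P i \<noteq> {}" using reg unfolding S_regular_def by blast
lemma Pdisj: "i < k \<Longrightarrow> j < k \<Longrightarrow> i \<noteq> j \<Longrightarrow> P i \<inter> P j = {}" using reg unfolding S_regular_def by blast
lemma Pun: "(\<Union>i<k. P i) = V" using reg unfolding S_regular_def by blast
lemma deg: "i < k \<Longrightarrow> j < k \<Longrightarrow> u \<in> P i \<Longrightarrow> card {v \<in> P j. E u v} = S i j"
  using reg unfolding S_regular_def by blast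
lemma finP: "i < k \<Longrightarrow> finite (P i)" using PV finV finite_subset by blast
lemma cardP: "i < k \<Longrightarrow> card (P i) > 0" using finP Pne card_gt_0_iff by blast
lemma Esym: "E u v = E v u" using sg unfolding simple_graph_def by blast

lemma sum_cells: "(\<Sum>v\<in>V. g v) = (\<Sum>j<k. \<Sum>v\<in>P j. g v)"
proof -
  have "(\<Sum>v\<in>V. g v) = sum g (\<Union>(P ` {..<k}))" using Pun by simp
  also have "\<dots> = (\<Sum>j<k. \<Sum>v\<in>P j. g v)"
    by (rule sum.UNION_disjoint) (auto simp: finP Pdisj)
  finally show ?thesis .
qed

definition cf :: "(nat \<Rightarrow> real) \<Rightarrow> 'a \<Rightarrow> real" where
  "cf c v = (\<Sum>i<k. if v \<in> P i then c i else 0)"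

lemma cf_val: "j < k \<Longrightarrow> v \<in> P j \<Longrightarrow> cf c v = c j"
proof -
  assume j: "j < k" and v: "v \<in> P j"
  have "cf c v = (\<Sum>i\<in>{j}. if v \<in> P i then c i else 0)"
    unfolding cf_def
  proof (rule sum.mono_neutral_right)
    show "\<forall>i\<in>{..<k} - {j}. (if v \<in> P i then c i else 0) = 0" using Pdisj[OF _ j] v by auto
  qed (use j in auto)
  then show ?thesis using v by simp
qed

lemma cf_out: "v \<notin> V \<Longrightarrow> cf c v = 0"
  unfolding cf_def using PV by (fastforce intro!: sum.neutral)

lemma ip_cf: "ip V (cf c) f = (\<Sum>j<k. c j * (\<Sum>v\<in>P j. f v))"
  unfolding ip_def sum_cells by (auto simp: sum_distrib_left cf_val intro!: sum.cong)

lemma ip_cf0: "f \<in> W_perp V k P \<Longrightarrow> ip V (cf c) f = 0"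
  unfolding ip_cf W_perp_def by simp

lemma ip_indf: "X \<subseteq> V \<Longrightarrow> ip V (indf X) g = (\<Sum>v\<in>X. g v)"
proof -
  assume X: "X \<subseteq> V"
  have "ip V (indf X) g = (\<Sum>v\<in>V. if v \<in> X then g v else 0)"
    unfolding ip_def indf_def by (rule sum.cong) auto
  also have "\<dots> = (\<Sum>v\<in>X. g v)"
    using finV X by (simp add: sum.If_cases Int_absorb1 Int_commute flip: Collect_mem_eq)
  finally show ?thesis .
qed

lemma adj_indP: "i < k \<Longrightarrow> v \<in> V \<Longrightarrow> adj_op V E (indf (P i)) v = cf (\<lambda>j. real (S j i)) v"
proof -
  assume i: "i < k" and v: "v \<in> V"
  then obtain j where j: "j < k" "v \<in> P j" using Pun by auto
  show ?thesis unfolding adj_indf[OF finV PV[OF i]] cf_val[OF j] deg[OF j(1) i j(2)] ..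
qed

lemma inv: "f \<in> W_perp V k P \<Longrightarrow> adj_op V E f \<in> W_perp V k P"
proof -
  assume f: "f \<in> W_perp V k P"
  have "sum (adj_op V E f) (P i) = 0" if i: "i < k" for i
  proof -
    have "sum (adj_op V E f) (P i) = ip V (indf (P i)) (adj_op V E f)" using ip_indf[OF PV[OF i]] by simp
    also have "\<dots> = ip V (adj_op V E (indf (P i))) f" by (rule adj_sym[OF sg])
    also have "\<dots> = ip V (cf (\<lambda>j. real (S j i))) f" by (rule ip_cong) (auto simp: adj_indP[OF i])
    also have "\<dots> = 0" by (rule ip_cf0[OF f])
    finally show ?thesis .
  qed
  moreover have "\<forall>x. x \<notin> V \<longrightarrow> adj_op V E f x = 0" using adj_out[OF sg] by blast
  ultimately show ?thesis unfolding W_perp_def by blast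
qed

lemma dcount: "i < k \<Longrightarrow> j < k \<Longrightarrow> real (card (P i)) * S i j = real (card (P j)) * S j i"
proof -
  assume i: "i < k" and j: "j < k"
  have "ip V (indf (P i)) (adj_op V E (indf (P j))) = ip V (indf (P i)) (cf (\<lambda>l. real (S l j)))"
    by (rule ip_cong) (auto simp: adj_indP[OF j])
  also have "\<dots> = (\<Sum>v\<in>P i. cf (\<lambda>l. real (S l j)) v)" by (rule ip_indf[OF PV[OF i]])
  also have "\<dots> = real (card (P i)) * S i j" by (simp add: cf_val[OF i])
  finally have 1: "ip V (indf (P i)) (adj_op V E (indf (P j))) = real (card (P i)) * S i j" .
  have "ip V (indf (P j)) (adj_op V E (indf (P i))) = ip V (indf (P j)) (cf (\<lambda>l. real (S l i)))"
    by (rule ip_cong) (auto simp: adj_indP[OF i])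
  also have "\<dots> = (\<Sum>v\<in>P j. cf (\<lambda>l. real (S l i)) v)" by (rule ip_indf[OF PV[OF j]])
  also have "\<dots> = real (card (P j)) * S j i" by (simp add: cf_val[OF j])
  finally have 2: "ip V (indf (P j)) (adj_op V E (indf (P i))) = real (card (P j)) * S j i" .
  have "ip V (indf (P i)) (adj_op V E (indf (P j))) = ip V (indf (P j)) (adj_op V E (indf (P i)))"
    using adj_sym[OF sg] ip_comm by metis
  then show ?thesis using 1 2 by simp
qed

end

sublocale sr \<subseteq> gr V E k P
  by unfold_locales (auto simp: sg inv)



context sr begin

lemma adj_cf: "u \<in> V \<Longrightarrow> adj_op V E (cf c) u = (\<Sum>i<k. c i * adj_op V E (indf (P i)) u)"
proof -
  have "cf c = (\<lambda>v. \<Sum>i<k. c i * indf (P i) v)" unfolding cf_def indf_def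
    by (rule ext, rule sum.cong) auto
  then show ?thesis by (simp add: adj_sum adj_scale)
qed

lemma cell_part:
  fixes B :: "'a set" and c :: "nat \<Rightarrow> real"
  assumes B: "B \<subseteq> V"
  assumes c_def: "c = (\<lambda>i. real (card (B \<inter> P i)) / real (card (P i)))"
  assumes x_def: "x = (\<lambda>v. 1 * indf B v + (-1) * cf c v)"
  shows "x \<in> W_perp V k P" and "indf B = (\<lambda>v. 1 * cf c v + 1 * x v)"
    and "ip V x x = (\<Sum>j<k. real (card (B \<inter> P j)) * (1 - c j))"
proof -
  have sx: "(\<Sum>v\<in>P j. x v) = 0" if j: "j < k" for j
  proof -
    have "(\<Sum>v\<in>P j. x v) = real (card (B \<inter> P j)) - (\<Sum>v\<in>P j. cf c v)"
      unfolding x_def by (simp add: sum_subtractf sum_indf finP[OF j])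
    also have "(\<Sum>v\<in>P j. cf c v) = real (card (P j)) * c j" by (simp add: cf_val[OF j])
    finally show ?thesis unfolding c_def using cardP[OF j] by simp
  qed
  have "\<forall>v. v \<notin> V \<longrightarrow> x v = 0" unfolding x_def indf_def using B cf_out by auto
  then show xU: "x \<in> W_perp V k P" unfolding W_perp_def using sx by blast
  show ib: "indf B = (\<lambda>v. 1 * cf c v + 1 * x v)" unfolding x_def by auto
  have "ip V x x = ip V x (\<lambda>v. 1 * indf B v + (-1) * cf c v)" by (simp only: x_def)
  also have "\<dots> = 1 * ip V x (indf B) + (-1) * ip V x (cf c)" by (rule ip_lin2)
  also have "ip V x (cf c) = 0" using ip_cf0[OF xU] ip_comm by metis
  also have "ip V x (indf B) = ip V (indf B) x" by (rule ip_comm)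
  also have "\<dots> = ip V (indf B) (\<lambda>v. 1 * indf B v + (-1) * cf c v)" by (simp only: x_def)
  also have "\<dots> = 1 * ip V (indf B) (indf B) + (-1) * ip V (indf B) (cf c)" by (rule ip_lin2)
  also have "ip V (indf B) (indf B) = (\<Sum>j<k. real (card (B \<inter> P j)))"
  proof -
    have "ip V (indf B) (indf B) = (\<Sum>v\<in>V. indf B v)" unfolding ip_def indf_def by (rule sum.cong) auto
    then show ?thesis by (simp add: sum_cells sum_indf finP)
  qed
  also have "ip V (indf B) (cf c) = (\<Sum>j<k. c j * real (card (B \<inter> P j)))"
    unfolding ip_comm[of V "indf B"] ip_cf by (simp add: sum_indf finP)
  finally show "ip V x x = (\<Sum>j<k. real (card (B \<inter> P j)) * (1 - c j))"
    by (simp add: sum_subtractf algebra_simps)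
qed

end


context sr begin

lemma edges_ip: "B \<subseteq> V \<Longrightarrow> C \<subseteq> V \<Longrightarrow> real (edges_between E B C) = ip V (indf B) (adj_op V E (indf C))"
proof -
  assume B: "B \<subseteq> V" and C: "C \<subseteq> V"
  have fB: "finite B" using B finV finite_subset by blast
  have fC: "finite C" using C finV finite_subset by blast
  have "ip V (indf B) (adj_op V E (indf C)) = (\<Sum>u\<in>B. real (card {v \<in> C. E u v}))"
    unfolding ip_indf[OF B] adj_indf[OF finV C] ..
  also have "\<dots> = real (card (SIGMA u:B. {v \<in> C. E u v}))"
    using fB fC by simp
  also have "(SIGMA u:B. {v \<in> C. E u v}) = {(u, v). u \<in> B \<and> v \<in> C \<and> E u v}" by auto
  finally show ?thesis unfolding edges_between_def by simp
qed

lemma sqrt_term: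
  assumes i: "i < k" and j: "j < k"
  shows "sqrt (real (S i j * S j i) / (real (card (P i)) * real (card (P j))))
       = real (S i j) / real (card (P j))"
proof -
  have ni: "real (card (P i)) > 0" and nj: "real (card (P j)) > 0" using cardP i j by auto
  have d: "real (S j i) = real (card (P i)) * S i j / real (card (P j))"
    using dcount[OF i j] nj by (simp add: field_simps)
  have "real (S i j * S j i) / (real (card (P i)) * real (card (P j))) = (real (S i j) / real (card (P j)))^2"
    unfolding of_nat_mult d using ni nj by (simp add: field_simps power2_eq_square)
  then show ?thesis by simp
qed

lemma main:
  assumes B: "B \<subseteq> V" and C: "C \<subseteq> V"
  shows "\<bar>real (edges_between E B C)
           - (\<Sum>i<k. \<Sum>j<k. sqrt (real (S i j * S j i) / (real (card (P i)) * real (card (P j))))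
                * real (card (B \<inter> P i)) * real (card (C \<inter> P j)))\<bar>
         \<le> lambda_B V E k P *
           sqrt (\<Sum>i<k. \<Sum>j<k. real (card (B \<inter> P i)) * real (card (C \<inter> P j))
                  * (1 - real (card (B \<inter> P i)) / real (card (P i)))
                  * (1 - real (card (C \<inter> P j)) / real (card (P j))))"
proof -
  define \<beta> where "\<beta> = (\<lambda>i. real (card (B \<inter> P i)) / real (card (P i)))"
  define \<gamma> where "\<gamma> = (\<lambda>i. real (card (C \<inter> P i)) / real (card (P i)))"
  define xB where "xB = (\<lambda>v. 1 * indf B v + (-1) * cf \<beta> v)"
  define xC where "xC = (\<lambda>v. 1 * indf C v + (-1) * cf \<gamma> v)"
  note cb = cell_part[OF B \<beta>_def xB_def]
  note cc = cell_part[OF C \<gamma>_def xC_def]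
  let ?A = "adj_op V E"
  have e2: "?A (indf C) = (\<lambda>u. 1 * ?A (cf \<gamma>) u + 1 * ?A xC u)"
    by (subst cc(2), rule ext, rule adj_lin)
  have "real (edges_between E B C) = ip V (indf B) (?A (indf C))" by (rule edges_ip[OF B C])
  also have "\<dots> = ip V (\<lambda>v. 1 * cf \<beta> v + 1 * xB v) (\<lambda>u. 1 * ?A (cf \<gamma>) u + 1 * ?A xC u)"
    using cb(2) e2 by simp
  also have "\<dots> = ip V (cf \<beta>) (?A (cf \<gamma>)) + ip V (cf \<beta>) (?A xC) + ip V xB (?A (cf \<gamma>)) + ip V xB (?A xC)"
    unfolding ip_lin ip_lin2 by simp
  also have "ip V (cf \<beta>) (?A xC) = 0" by (rule ip_cf0[OF inv[OF cc(1)]])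
  also have "ip V xB (?A (cf \<gamma>)) = ip V (cf \<gamma>) (?A xB)" by (rule ipA_comm)
  also have "\<dots> = 0" by (rule ip_cf0[OF inv[OF cb(1)]])
  finally have E1: "real (edges_between E B C) = ip V (cf \<beta>) (?A (cf \<gamma>)) + ip V xB (?A xC)" by simp
  have Acf: "?A (cf \<gamma>) v = (\<Sum>i<k. \<gamma> i * S j i)" if j: "j < k" and v: "v \<in> P j" for j v
  proof -
    have vV: "v \<in> V" using PV[OF j] v by blast
    show ?thesis unfolding adj_cf[OF vV]
      by (rule sum.cong) (auto simp: adj_indP[OF _ vV] cf_val[OF j v])
  qed
  have "ip V (cf \<beta>) (?A (cf \<gamma>)) = (\<Sum>j<k. \<beta> j * (\<Sum>v\<in>P j. ?A (cf \<gamma>) v))" by (rule ip_cf)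
  also have "\<dots> = (\<Sum>i<k. \<Sum>j<k. sqrt (real (S i j * S j i) / (real (card (P i)) * real (card (P j))))
                * real (card (B \<inter> P i)) * real (card (C \<inter> P j)))"
  proof (rule sum.cong[OF refl])
    fix i assume i: "i \<in> {..<k}"
    have "(\<Sum>v\<in>P i. ?A (cf \<gamma>) v) = real (card (P i)) * (\<Sum>j<k. \<gamma> j * S i j)"
      using Acf[of i] i by simp
    then have "\<beta> i * (\<Sum>v\<in>P i. ?A (cf \<gamma>) v) = (\<Sum>j<k. \<beta> i * real (card (P i)) * (\<gamma> j * S i j))"
      by (simp add: sum_distrib_left mult.assoc)
    also have "\<dots> = (\<Sum>j<k. sqrt (real (S i j * S j i) / (real (card (P i)) * real (card (P j))))
                * real (card (B \<inter> P i)) * real (card (C \<inter> P j)))"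
    proof (rule sum.cong[OF refl])
      fix j assume j: "j \<in> {..<k}"
      have ni: "real (card (P i)) > 0" and nj: "real (card (P j)) > 0" using cardP i j by auto
      show "\<beta> i * real (card (P i)) * (\<gamma> j * S i j) = sqrt (real (S i j * S j i) / (real (card (P i)) * real (card (P j))))
                * real (card (B \<inter> P i)) * real (card (C \<inter> P j))"
      proof -
        have ik: "i < k" and jk: "j < k" using i j by auto
        show ?thesis unfolding sqrt_term[OF ik jk] using ni nj
          by (simp add: \<beta>_def \<gamma>_def field_simps)
      qed
    qed
    finally show "\<beta> i * (\<Sum>v\<in>P i. ?A (cf \<gamma>) v) = (\<Sum>j<k. sqrt (real (S i j * S j i) / (real (card (P i)) * real (card (P j))))
                * real (card (B \<inter> P i)) * real (card (C \<inter> P j)))" .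
  qed
  finally have E2: "ip V (cf \<beta>) (?A (cf \<gamma>)) = (\<Sum>i<k. \<Sum>j<k. sqrt (real (S i j * S j i) / (real (card (P i)) * real (card (P j))))
                * real (card (B \<inter> P i)) * real (card (C \<inter> P j)))" .
  have R: "(\<Sum>i<k. \<Sum>j<k. real (card (B \<inter> P i)) * real (card (C \<inter> P j))
                  * (1 - real (card (B \<inter> P i)) / real (card (P i)))
                  * (1 - real (card (C \<inter> P j)) / real (card (P j)))) = ip V xB xB * ip V xC xC"
    unfolding cb(3) cc(3) sum_product \<beta>_def \<gamma>_def by (rule sum.cong[OF refl], rule sum.cong[OF refl]) (simp add: divide_inverse algebra_simps)
  have "\<bar>ip V xB (?A xC)\<bar> \<le> lambda_B V E k P * sqrt (ip V xB xB) * sqrt (ip V xC xC)"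
    by (rule main_bound[OF cb(1) cc(1)])
  then show ?thesis unfolding R E1 E2[symmetric] by (simp add: real_sqrt_mult mult.assoc)
qed

end

theorem mainTheorem11:
  fixes V :: "'a set" and E :: "'a \<Rightarrow> 'a \<Rightarrow> bool" and k :: nat
    and P :: "nat \<Rightarrow> 'a set" and S :: "nat \<Rightarrow> nat \<Rightarrow> nat" and B C :: "'a set"
  assumes "simple_graph V E" and "connected_graph V E"
    and "S_regular V E k P S"
    and "card V > k"
    and "B \<subseteq> V" and "C \<subseteq> V"
  shows "\<bar>real (edges_between E B C)
           - (\<Sum>i<k. \<Sum>j<k. sqrt (real (S i j * S j i) / (real (card (P i)) * real (card (P j))))
                * real (card (B \<inter> P i)) * real (card (C \<inter> P j)))\<bar>
         \<le> lambda_B V E k P *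
           sqrt (\<Sum>i<k. \<Sum>j<k. real (card (B \<inter> P i)) * real (card (C \<inter> P j))
                  * (1 - real (card (B \<inter> P i)) / real (card (P i)))
                  * (1 - real (card (C \<inter> P j)) / real (card (P j))))"
proof -
  interpret sr V E k P S using assms(1,3) by unfold_locales
  show ?thesis by (rule main[OF assms(5,6)])
qed

end
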